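(* Let $k$ be an odd positive integer. Then $$\sum_{n=1}^{k}\frac{\cos^2(\pi n/k)}{\cos^4(2\pi n/k)}=\begin{cases}\dfrac{k}{12}\,(3+4k+3k^2+2k^3), & k\equiv 1 \pmod 4,\\[2mm] \dfrac{k}{12}\,(-3+4k-3k^2+2k^3), & k\equiv 3 \pmod 4.\end{cases}$$ *)

theory Defs
  imports Complex_Main
begin

end

theory Submission
  imports Defs
begin

lemma ch2: "(of_nat (k choose 2) :: complex) = of_nat k * (of_nat k - 1) / 2"
  by (simp add: binomial_gbinomial gbinomial_Suc numeral_2_eq_2 fact_numeral)
lemma ch3: "(of_nat (k choose 3) :: complex) = of_nat k * (of_nat k - 1) * (of_nat k - 2) / 6"
  by (simp add: binomial_gbinomial gbinomial_Suc numeral_3_eq_3 fact_numeral atLeast0_atMost_Suc algebra_simps)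

lemma omega_pow_ne1:
  assumes "0 < l" "l < k"
  shows "cis (2*pi/real k) ^ l \<noteq> 1"
proof
  assume "cis (2*pi/real k) ^ l = 1"
  hence "cos (real l * (2*pi/real k)) = 1" by (simp add: DeMoivre complex_eq_iff)
  then obtain m :: int where m: "real l * (2*pi/real k) = m * 2 * pi" by (auto simp: cos_one_2pi_int)
  have "real l = m * real k" using m assms by (simp add: field_simps)
  hence "int l = m * int k" by (metis of_int_eq_iff of_int_mult of_int_of_nat_eq)
  show False
  proof (cases "m \<le> 0")
    case True
    hence "m * int k \<le> 0" by (simp add: mult_nonpos_nonneg)
    thus False using \<open>int l = m * int k\<close> assms by linarith
  next
    case False
    hence "m * int k \<ge> 1 * int k" by (intro mult_right_mono) auto
    thus False using \<open>int l = m * int k\<close> assms by linarith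
  qed
qed

lemma root_sum:
  fixes w :: complex
  assumes "w^k = 1" "w^l \<noteq> 1"
  shows "(\<Sum>n<k. (w^n)^l) = 0"
proof -
  have "(\<Sum>n<k. (w^n)^l) = (\<Sum>n<k. (w^l)^n)" by (simp add: power_mult[symmetric] mult.commute)
  also have "\<dots> = ((w^l)^k - 1) / (w^l - 1)" using assms(2) by (simp add: geometric_sum)
  also have "(w^l)^k = 1" using assms(1) by (metis power_mult mult.commute power_one)
  finally show ?thesis by simp
qed

lemma pow_sum:
  fixes w c0 :: complex
  assumes "w^k = 1" "\<And>l. 0 < l \<Longrightarrow> l < k \<Longrightarrow> w^l \<noteq> 1" "m < k"
  shows "(\<Sum>n<k. (1 - c0 * w^n)^m) = of_nat k"
proof -
  have "(\<Sum>n<k. (1 - c0 * w^n)^m) = (\<Sum>n<k. \<Sum>l\<le>m. of_nat (m choose l) * (- c0)^l * (w^n)^l)"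
  proof (rule sum.cong[OF refl])
    fix n
    have "(1 - c0 * w^n)^m = (- c0 * w^n + 1)^m" by simp
    also have "\<dots> = (\<Sum>l\<le>m. of_nat (m choose l) * (- c0 * w^n)^l * 1^(m-l))" by (rule binomial_ring)
    finally show "(1 - c0 * w^n)^m = (\<Sum>l\<le>m. of_nat (m choose l) * (- c0)^l * (w^n)^l)"
      by (simp only: power_mult_distrib power_one mult_1_right mult.assoc)
  qed
  also have "\<dots> = (\<Sum>l\<le>m. of_nat (m choose l) * (- c0)^l * (\<Sum>n<k. (w^n)^l))"
    by (subst sum.swap) (simp add: sum_distrib_left)
  also have "\<dots> = (\<Sum>l\<in>{0}. of_nat (m choose l) * (- c0)^l * (\<Sum>n<k. (w^n)^l))"
  proof (rule sum.mono_neutral_right)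
    show "\<forall>l\<in>{..m} - {0}. of_nat (m choose l) * (- c0)^l * (\<Sum>n<k. (w^n)^l) = 0"
    proof
      fix l assume "l \<in> {..m} - {0}"
      hence "0 < l" "l < k" using assms(3) by auto
      thus "of_nat (m choose l) * (- c0)^l * (\<Sum>n<k. (w^n)^l) = 0"
        using root_sum[OF assms(1) assms(2)] by simp
    qed
  qed auto
  finally show ?thesis by simp
qed

lemma point:
  fixes t c :: complex
  assumes t: "t \<noteq> 0" and tc: "(1 - t)^k = c" and j: "j \<ge> 1"
  shows "(c - 1)/t^j = (\<Sum>i\<in>{1..<j}. of_nat (k choose i) * (-1)^i / t^(j-i))
            + (\<Sum>i\<in>{j..k+j}. of_nat (k choose i) * (-1)^i * t^(i-j))"
proof -
  let ?f = "\<lambda>i. of_nat (k choose i) * (-1)^i * t^i :: complex"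
  have "c = (-t + 1)^k" using tc by simp
  also have "\<dots> = (\<Sum>i\<le>k. of_nat (k choose i) * (-t)^i * 1^(k-i))" by (rule binomial_ring)
  also have "\<dots> = (\<Sum>i\<le>k. ?f i)"
    by (intro sum.cong refl) (simp add: power_minus[of t])
  also have "\<dots> = (\<Sum>i\<le>k+j. ?f i)"
    by (rule sum.mono_neutral_left) auto
  also have "{..k+j} = insert 0 ({1..<j} \<union> {j..k+j})" using j by auto
  also have "sum ?f \<dots> = ?f 0 + (sum ?f {1..<j} + sum ?f {j..k+j})"
    using j by (subst sum.insert) (auto intro: sum.union_disjoint)
  finally have "c - 1 = sum ?f {1..<j} + sum ?f {j..k+j}" by simp
  hence "(c - 1)/t^j = sum ?f {1..<j} / t^j + sum ?f {j..k+j} / t^j" by (simp add: add_divide_distrib)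
  also have "sum ?f {1..<j} / t^j = (\<Sum>i\<in>{1..<j}. of_nat (k choose i) * (-1)^i / t^(j-i))"
    unfolding sum_divide_distrib
  proof (intro sum.cong refl)
    fix i assume "i \<in> {1..<j}"
    hence "t^j = t^i * t^(j-i)" by (simp add: power_add[symmetric])
    thus "?f i / t^j = of_nat (k choose i) * (-1)^i / t^(j-i)" using t by (simp add: field_simps)
  qed
  also have "sum ?f {j..k+j} / t^j = (\<Sum>i\<in>{j..k+j}. of_nat (k choose i) * (-1)^i * t^(i-j))"
    unfolding sum_divide_distrib
  proof (intro sum.cong refl)
    fix i assume "i \<in> {j..k+j}"
    hence "t^i = t^j * t^(i-j)" by (simp add: power_add[symmetric])
    thus "?f i / t^j = of_nat (k choose i) * (-1)^i * t^(i-j)" using t by (simp add: field_simps)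
  qed
  finally show ?thesis .
qed

lemma alt_const:
  assumes "k > 0"
  shows "(\<Sum>i\<in>{j..k+j}. of_nat (k choose i) * (-1)^i :: complex) = - (\<Sum>i<j. of_nat (k choose i) * (-1)^i)"
proof -
  let ?f = "\<lambda>i. of_nat (k choose i) * (-1)^i :: complex"
  have "0 = (\<Sum>i\<le>k. ?f i)" using choose_alternating_sum[OF assms, where 'a=complex] by (simp add: mult.commute)
  also have "\<dots> = (\<Sum>i\<le>k+j. ?f i)" by (rule sum.mono_neutral_left) auto
  also have "{..k+j} = {..<j} \<union> {j..k+j}" by auto
  also have "sum ?f \<dots> = sum ?f {..<j} + sum ?f {j..k+j}" by (rule sum.union_disjoint) auto
  finally show ?thesis by (simp add: eq_neg_iff_add_eq_0 add.commute)
qed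

lemma recur:
  fixes w c0 :: complex
  assumes wk: "w^k = 1" and wl: "\<And>l. 0 < l \<Longrightarrow> l < k \<Longrightarrow> w^l \<noteq> 1"
    and c0: "c0^k \<noteq> 1" and j: "j \<ge> 1"
  shows "(c0^k - 1) * (\<Sum>n<k. 1/(1 - c0 * w^n)^j) =
     (\<Sum>i\<in>{1..<j}. of_nat (k choose i) * (-1)^i * (\<Sum>n<k. 1/(1 - c0 * w^n)^(j-i)))
     + of_nat k * (\<Sum>i\<in>{j..k+j}. of_nat (k choose i) * (-1)^i)"
proof -
  have pt: "(c0^k - 1)/(1 - c0 * w^n)^j = (\<Sum>i\<in>{1..<j}. of_nat (k choose i) * (-1)^i / (1 - c0 * w^n)^(j-i))
            + (\<Sum>i\<in>{j..k+j}. of_nat (k choose i) * (-1)^i * (1 - c0 * w^n)^(i-j))" for n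
  proof (rule point[OF _ _ j])
    have "(c0 * w^n)^k = c0^k" using wk by (simp add: power_mult_distrib power_mult[symmetric] mult.commute[of n] power_mult)
    thus "(1 - (1 - c0 * w^n))^k = c0^k" by simp
    show "1 - c0 * w^n \<noteq> 0"
    proof
      assume "1 - c0 * w^n = 0"
      hence "(c0 * w^n)^k = 1" by simp
      with \<open>(c0 * w^n)^k = c0^k\<close> c0 show False by simp
    qed
  qed
  have "(c0^k - 1) * (\<Sum>n<k. 1/(1 - c0 * w^n)^j) = (\<Sum>n<k. (c0^k - 1)/(1 - c0 * w^n)^j)"
    by (simp add: sum_distrib_left)
  also have "\<dots> = (\<Sum>n<k. \<Sum>i\<in>{1..<j}. of_nat (k choose i) * (-1)^i / (1 - c0 * w^n)^(j-i))
       + (\<Sum>n<k. \<Sum>i\<in>{j..k+j}. of_nat (k choose i) * (-1)^i * (1 - c0 * w^n)^(i-j))"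
    by (simp add: pt sum.distrib)
  also have "(\<Sum>n<k. \<Sum>i\<in>{1..<j}. of_nat (k choose i) * (-1)^i / (1 - c0 * w^n)^(j-i))
     = (\<Sum>i\<in>{1..<j}. of_nat (k choose i) * (-1)^i * (\<Sum>n<k. 1/(1 - c0 * w^n)^(j-i)))"
    by (subst sum.swap) (simp add: sum_distrib_left)
  also have "(\<Sum>n<k. \<Sum>i\<in>{j..k+j}. of_nat (k choose i) * (-1)^i * (1 - c0 * w^n)^(i-j))
     = (\<Sum>i\<in>{j..k+j}. of_nat (k choose i) * (-1)^i * (\<Sum>n<k. (1 - c0 * w^n)^(i-j)))"
    by (subst sum.swap) (simp add: sum_distrib_left)
  also have "\<dots> = (\<Sum>i\<in>{j..k+j}. of_nat (k choose i) * (-1)^i * of_nat k)"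
  proof (intro sum.cong refl)
    fix i assume i: "i \<in> {j..k+j}"
    show "of_nat (k choose i) * (-1)^i * (\<Sum>n<k. (1 - c0 * w^n)^(i-j)) = of_nat (k choose i) * (-1)^i * of_nat k"
    proof (cases "i \<le> k")
      case True
      hence "i - j < k" using j i by auto
      thus ?thesis using pow_sum[OF wk wl] by simp
    qed simp
  qed
  finally show ?thesis by (simp add: sum_distrib_left mult.commute mult.left_commute)
qed

lemma Evals:
  fixes w c0 :: complex and s :: real and E :: "nat \<Rightarrow> complex"
  assumes wk: "w^k = 1" and wl: "\<And>l. 0 < l \<Longrightarrow> l < k \<Longrightarrow> w^l \<noteq> 1"
    and k: "k > 0" and s: "s = 1 \<or> s = -1" and c0: "c0^k = of_real s * \<i>"
    and E_def: "E = (\<lambda>j. (\<Sum>n<k. 1/(1 - c0 * w^n)^j))"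
  shows "E 1 = of_nat k * (1 + of_real s * \<i>)/2"
    and "E 2 = of_nat k * (1 + of_real s * \<i>)/2 - of_nat k ^ 2 / 2"
    and "E 3 = of_nat k * (1 + of_real s * \<i>)/2 - 3 * of_nat k ^ 2 / 4 - of_real s * \<i> * of_nat k ^ 3 / 4"
    and "E 4 = of_nat k * (1 + of_real s * \<i>)/2 - 11 * of_nat k ^ 2 / 12 - of_real s * \<i> * of_nat k ^ 3 / 2 + of_nat k ^ 4 / 6"
proof -
  have c0ne: "c0^k \<noteq> 1" using c0 s by (auto simp: complex_eq_iff)
  have cne: "of_real s * \<i> - 1 \<noteq> (0::complex)" using s by (auto simp: complex_eq_iff)
  have R: "(of_real s * \<i> - 1) * E j = (\<Sum>i\<in>{1..<j}. of_nat (k choose i) * (-1)^i * E (j-i))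
     + of_nat k * - (\<Sum>i<j. of_nat (k choose i) * (-1)^i)" if "j \<ge> 1" for j
    using recur[OF wk wl c0ne that] unfolding E_def c0 alt_const[OF k] .
  have R1: "(of_real s * \<i> - 1) * E 1 = - of_nat k" using R[of 1] by simp
  have R2: "(of_real s * \<i> - 1) * E 2 = - of_nat k * E 1 + of_nat k * (of_nat k - 1)" using R[of 2]
    by (simp add: numeral_2_eq_2 algebra_simps)
  have solve: "\<And>E X R. (of_real s * \<i> - 1) * E = R \<Longrightarrow> (of_real s * \<i> - 1) * X = R \<Longrightarrow> E = X"
    using cne by simp
  show e1: "E 1 = of_nat k * (1 + of_real s * \<i>)/2"
    by (rule solve[OF R1]) (use s in \<open>auto simp: complex_eq_iff algebra_simps\<close>)
  show e2: "E 2 = of_nat k * (1 + of_real s * \<i>)/2 - of_nat k ^ 2 / 2"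
    by (rule solve[OF R2[unfolded e1]]) (use s in \<open>auto simp: complex_eq_iff algebra_simps power2_eq_square\<close>)
  have s3: "{1..<3::nat} = {1,2}" and l3: "{..<3::nat} = {0,1,2}"
    and s4: "{1..<4::nat} = {1,2,3}" and l4: "{..<4::nat} = {0,1,2,3}" by auto
  have E1': "E (Suc 0) = E 1" by simp
  have R3: "(of_real s * \<i> - 1) * E 3 = - of_nat k * E 2 + of_nat k * (of_nat k - 1) / 2 * E 1
      - of_nat k * (1 - of_nat k + of_nat k * (of_nat k - 1) / 2)" using R[of 3, unfolded s3 l3]
    by (simp add: s3 l3 ch2 algebra_simps)
  have R4: "(of_real s * \<i> - 1) * E 4 = - of_nat k * E 3 + of_nat k * (of_nat k - 1) / 2 * E 2
      - of_nat k * (of_nat k - 1) * (of_nat k - 2) / 6 * E 1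
      - of_nat k * (1 - of_nat k + of_nat k * (of_nat k - 1) / 2 - of_nat k * (of_nat k - 1) * (of_nat k - 2) / 6)" using R[of 4, unfolded s4 l4, simplified, unfolded E1']
    by (simp add: ch2 ch3 algebra_simps)
  show e3: "E 3 = of_nat k * (1 + of_real s * \<i>)/2 - 3 * of_nat k ^ 2 / 4 - of_real s * \<i> * of_nat k ^ 3 / 4"
    by (rule solve[OF R3[unfolded e1 e2]]) (use s in \<open>auto simp: complex_eq_iff algebra_simps power2_eq_square power3_eq_cube\<close>)
  show e4: "E 4 = of_nat k * (1 + of_real s * \<i>)/2 - 11 * of_nat k ^ 2 / 12 - of_real s * \<i> * of_nat k ^ 3 / 2 + of_nat k ^ 4 / 6"
    by (rule solve[OF R4[unfolded e1 e2 e3]]) (use s in \<open>auto simp: complex_eq_iff algebra_simps power2_eq_square power3_eq_cube power4_eq_xxxx field_simps\<close>)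
qed

lemma pw:
  fixes i y :: complex
  assumes ii: "i*i = -1" and y: "y \<noteq> 0" "1 - y \<noteq> 0" "1 + y \<noteq> 0"
  shows "(1 + i*(1-y^2)/(2*y)) / (2 * (i*(1-y^2)/(2*y))^4) =
    ((1/(1-y))^4 + (1/(1+y))^4 - 2*((1/(1-y))^3 + (1/(1+y))^3) + ((1/(1-y))^2 + (1/(1+y))^2)/2 + (1/(1-y) + 1/(1+y))/2
     + i*((1/(1-y))^3 - (1/(1+y))^3 - 3/2*((1/(1-y))^2 - (1/(1+y))^2)))/2"
proof -
  have i0: "i \<noteq> 0" using ii by auto
  have i4: "i^4 = 1" using ii by (simp add: power4_eq_xxxx)
  have i3: "i^3 = -i" using ii by (simp add: power3_eq_cube)
  have yy: "1 - y^2 = (1-y)*(1+y)" by (simp add: algebra_simps power2_eq_square)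
  have lhs: "(1 + i*(1-y^2)/(2*y)) / (2 * (i*(1-y^2)/(2*y))^4) = (2*y + i*(1-y)*(1+y)) * 4 * y^3 / ((1-y)^4*(1+y)^4)"
  proof -
    have X4: "(i*(1-y^2)/(2*y))^4 = (1-y)^4*(1+y)^4/(16*y^4)"
      unfolding yy by (simp add: power_divide power_mult_distrib i4)
    show ?thesis unfolding X4 using y apply (simp add: field_simps yy) by algebra
  qed
  define a where "a = 1/(1-y)"
  define b where "b = 1/(1+y)"
  have ha: "a*(1-y) = 1" using y by (simp add: a_def)
  have hb: "b*(1+y) = 1" using y by (simp add: b_def)
  have "(2*y + i*(1-y)*(1+y)) * 4 * y^3 / ((1-y)^4*(1+y)^4) = 8*y^4*a^4*b^4 + 4*i*y^3*a^3*b^3"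
    using y apply (simp add: a_def b_def field_simps) by algebra
  also have "\<dots> = (a^4 + b^4 - 2*(a^3 + b^3) + (a^2 + b^2)/2 + (a + b)/2
     + i*(a^3 - b^3 - 3/2*(a^2 - b^2)))/2"
  proof -
    have "4*(8*y^4*a^4*b^4 + 4*i*y^3*a^3*b^3) = 2*a^4+2*b^4-4*a^3-4*b^3+a^2+b^2+a+b + i*(2*a^3-2*b^3-3*a^2+3*b^2)"
      using ha hb ii by algebra
    hence "8*y^4*a^4*b^4 + 4*i*y^3*a^3*b^3 = (2*a^4+2*b^4-4*a^3-4*b^3+a^2+b^2+a+b + i*(2*a^3-2*b^3-3*a^2+3*b^2))/4"
      by (simp add: field_simps)
    also have "\<dots> = (a^4 + b^4 - 2*(a^3 + b^3) + (a^2 + b^2)/2 + (a + b)/2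
     + i*(a^3 - b^3 - 3/2*(a^2 - b^2)))/2" by (simp add: field_simps)
    finally show ?thesis .
  qed
  finally show ?thesis unfolding lhs a_def b_def .
qed

lemma cos_ne0:
  assumes "odd k"
  shows "cos (2 * pi * real n / real k) \<noteq> 0"
proof
  assume "cos (2 * pi * real n / real k) = 0"
  then obtain m :: int where m: "2 * pi * real n / real k = m * pi + pi/2" by (auto simp: cos_zero_iff_int2)
  have k0: "real k > 0" using assms by (cases k) auto
  have "pi * (4 * real n) = pi * (real k * (2 * m + 1))" using m k0 by (simp add: field_simps)
  hence "4 * real n = real k * (2 * m + 1)" using pi_gt_zero by simp
  hence "real_of_int (4 * int n) = real_of_int (int k * (2 * m + 1))" by simp
  hence eq: "4 * int n = int k * (2 * m + 1)" by (simp only: of_int_eq_iff)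
  have "odd (int k * (2 * m + 1))" using assms by simp
  thus False unfolding eq[symmetric] by simp
qed

theorem mainTheorem1:
  fixes k :: nat
  assumes "odd k"
  shows "(\<Sum>n=1..k. cos (pi * real n / real k) ^ 2 / cos (2 * pi * real n / real k) ^ 4) =
    (if k mod 4 = 1
     then real k / 12 * (3 + 4 * real k + 3 * real k ^ 2 + 2 * real k ^ 3)
     else real k / 12 * (- 3 + 4 * real k - 3 * real k ^ 2 + 2 * real k ^ 3))"
proof -
  have k0: "k > 0" using assms by (cases k) auto
  define \<omega> where "\<omega> = cis (2 * pi / real k)"
  have wk: "\<omega> ^ k = 1" using k0 by (simp add: \<omega>_def DeMoivre)
  have wl: "\<And>l. 0 < l \<Longrightarrow> l < k \<Longrightarrow> \<omega> ^ l \<noteq> 1" unfolding \<omega>_def by (rule omega_pow_ne1)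
  define s1 :: real where "s1 = (if k mod 4 = 1 then 1 else -1)"
  have s1: "s1 = 1 \<or> s1 = -1" and s1': "-s1 = 1 \<or> -s1 = -1" by (auto simp: s1_def)
  have m4: "k mod 4 = 1 \<or> k mod 4 = 3" using assms by presburger
  have "\<i> ^ k = \<i> ^ (4 * (k div 4) + k mod 4)" by simp
  also have "\<dots> = \<i> ^ (k mod 4)"
  proof -
    have i4: "\<i> ^ 4 = (1::complex)" by (simp add: power4_eq_xxxx)
    show ?thesis by (simp only: power_add power_mult i4 power_one mult_1_left)
  qed
  finally have ik: "\<i> ^ k = of_real s1 * \<i>" using m4 by (auto simp: s1_def power3_eq_cube)
  have mik: "(-\<i>) ^ k = of_real (-s1) * \<i>" using assms ik by (simp add: power_minus_odd)
  define A where "A = (\<lambda>j. \<Sum>n<k. 1/(1 - \<i> * \<omega>^n)^j)"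
  define B where "B = (\<lambda>j. \<Sum>n<k. 1/(1 - (-\<i>) * \<omega>^n)^j)"
  note EA = Evals[OF wk wl k0 s1 ik A_def]
  note EB = Evals[OF wk wl k0 s1' mik B_def]
  define T where "T = (\<lambda>n::nat. cos (pi * real n / real k) ^ 2 / cos (2 * pi * real n / real k) ^ 4)"
  define F where "F = (\<lambda>a b :: complex. (a^4 + b^4 - 2*(a^3 + b^3) + (a^2 + b^2)/2 + (a + b)/2
     + \<i>*(a^3 - b^3 - 3/2*(a^2 - b^2)))/2)"
  define g where "g = (\<lambda>n::nat. F (1/(1 - \<i> * \<omega>^n)) (1/(1 - (-\<i>) * \<omega>^n)))"
  have pt: "complex_of_real (T n) = g n" for n
  proof -
    define \<theta> where "\<theta> = 2 * pi * real n / real k"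
    define C where "C = cos \<theta>"
    have C0: "C \<noteq> 0" unfolding C_def \<theta>_def by (rule cos_ne0[OF assms])
    have "cos (2 * (pi * real n / real k)) = 2 * cos (pi * real n / real k) ^ 2 - 1" by (rule cos_double_cos)
    hence c2: "cos (pi * real n / real k) ^ 2 = (1 + C) / 2" unfolding C_def \<theta>_def by (simp add: mult.assoc)
    have T: "T n = (1 + C) / (2 * C^4)" unfolding T_def c2 by (simp add: C_def \<theta>_def)
    define v where "v = \<omega>^n"
    have v: "v = cis \<theta>" unfolding v_def \<omega>_def \<theta>_def DeMoivre by (simp add: field_simps)
    define y where "y = \<i> * v"
    have y0: "y \<noteq> 0" by (simp add: y_def v)
    have "2 * v * of_real C = 1 + v^2"
      unfolding v C_def by (simp add: complex_eq_iff power2_eq_square algebra_simps)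
    hence Cy: "complex_of_real C = \<i>*(1-y^2)/(2*y)" using y0 unfolding y_def
      by (simp add: field_simps power2_eq_square)
    have "1 - y^2 \<noteq> 0" using Cy C0 by auto
    moreover have "1 - y^2 = (1 - y) * (1 + y)" by (simp add: power2_eq_square algebra_simps)
    ultimately have y1: "1 - y \<noteq> 0" "1 + y \<noteq> 0" by auto
    have "complex_of_real (T n) = (1 + complex_of_real C) / (2 * (complex_of_real C)^4)" unfolding T by simp
    also have "\<dots> = F (1/(1-y)) (1/(1+y))" unfolding Cy F_def
      by (rule pw[OF _ y0 y1]) simp
    also have "\<dots> = g n" by (simp add: g_def y_def v_def)
    finally show ?thesis .
  qed
  have "complex_of_real (\<Sum>n=1..k. T n) = (\<Sum>n=1..k. g n)" by (simp add: pt)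
  also have "\<dots> = (\<Sum>n<k. g n)"
  proof -
    have "g k = g 0" by (simp add: g_def wk)
    have "{1..k} = insert k {1..<k}" and "{..<k} = insert 0 {1..<k}" using k0 by auto
    thus ?thesis using \<open>g k = g 0\<close> by simp
  qed
  also have "\<dots> = 1/2*A 4 + 1/2*B 4 + (-1 + \<i>/2)*A 3 + (-1 - \<i>/2)*B 3
      + (1/4 - 3*\<i>/4)*A 2 + (1/4 + 3*\<i>/4)*B 2 + 1/4*A 1 + 1/4*B 1"
  proof -
    have Fexp: "F a b = 1/2*a^4 + 1/2*b^4 + (-1 + \<i>/2)*a^3 + (-1 - \<i>/2)*b^3
      + (1/4 - 3*\<i>/4)*a^2 + (1/4 + 3*\<i>/4)*b^2 + 1/4*a + 1/4*b" for a b
      by (simp add: F_def field_simps)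
    show ?thesis unfolding g_def Fexp A_def B_def power_one_over
      by (simp add: sum.distrib sum_distrib_left)
  qed
  also have "\<dots> = complex_of_real (if k mod 4 = 1
     then real k / 12 * (3 + 4 * real k + 3 * real k ^ 2 + 2 * real k ^ 3)
     else real k / 12 * (- 3 + 4 * real k - 3 * real k ^ 2 + 2 * real k ^ 3))"
    apply (simp only: EA EB)
    using m4 by (auto simp: s1_def complex_eq_iff field_simps power2_eq_square power3_eq_cube power4_eq_xxxx)
  finally show ?thesis unfolding T_def by (simp only: of_real_eq_iff)
qed

end
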